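(* For every LTL formula $\varphi$ in positive normal form and every $\sigma\in\Sigma^\omega$: $\sigma\models\varphi$ if and only if there exists $\varphi'\in\Delta_{\sigma_0}(\varphi)$ with $\sigma[1\dots]\models\varphi'$. (In the paper's notation: $\varphi\Leftrightarrow\bigvee_{x\in\Sigma,\ \varphi'\in\Delta_x(\varphi)} x\wedge\mathbf X\varphi'$.)
   Context: Fix a finite set $AP$, a finite alphabet $\Sigma$ and $I:\Sigma\to\mathcal P(AP)$. LTL formulae in positive normal form: $\varphi,\psi ::= p \mid \neg p \mid \mathbf{tt} \mid \mathbf{ff} \mid \varphi\wedge\psi \mid \varphi\vee\psi \mid \mathbf{X}\varphi \mid \varphi\,\mathbf{U}\,\psi \mid \varphi\,\mathbf{R}\,\psi$; $\mathbf F\varphi=\mathbf{tt}\,\mathbf U\varphi$, $\mathbf G\varphi=\mathbf{ff}\,\mathbf R\varphi$. Semantics on $\sigma\in\Sigma^\omega$ ($\sigma_i$ the $i$-th symbol, $\sigma[n\dots]$ the suffix from position $n$): $\sigma\models p$ iff $p\in I(\sigma_0)$; $\sigma\models\neg p$ iff $p\notin I(\sigma_0)$; $\mathbf{tt}$ always, $\mathbf{ff}$ never; $\wedge,\vee$ usual; $\sigma\models\mathbf X\varphi$ iff $\sigma[1\dots]\models\varphi$; $\sigma\models\varphi\mathbf U\psi$ iff $\exists n$, $\sigma[j\dots]\models\varphi$ for all $j<n$ and $\sigma[n\dots]\models\psi$; $\sigma\models\varphi\mathbf R\psi$ iff for all $n$, $\sigma[n\dots]\models\psi$ or $\sigma[j\dots]\models\varphi$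 for some $j<n$. A temporal formula is one whose outermost operator is not $\wedge$ or $\vee$; conjunctions of temporal formulae are normalised modulo associativity, commutativity and idempotence ($\mathbf{tt}$ is the empty conjunction). $\mathrm{SIMP}(\varphi\wedge\psi)=\{\varphi'\wedge\psi'\mid\varphi'\in\mathrm{SIMP}(\varphi),\psi'\in\mathrm{SIMP}(\psi)\}$, $\mathrm{SIMP}(\varphi\vee\psi)=\mathrm{SIMP}(\varphi)\cup\mathrm{SIMP}(\psi)$, $\mathrm{SIMP}(\varphi)=\{\varphi\}$ for temporal $\varphi$. For a literal $\ell$ ($p$ or $\neg p$), $x\models p$ iff $p\in I(x)$ and $x\models\neg p$ iff $p\notin I(x)$. Direct partial derivative $\Delta_x$ ($x\in\Sigma$): $\Delta_x(\mathbf{tt})=\{\mathbf{tt}\}$; $\Delta_x(\mathbf{ff})=\emptyset$; $\Delta_x(\ell)=\{\mathbf{tt}\}$ if $x\models\ell$, else $\emptyset$; $\Delta_x(\varphi\vee\psi)=\Delta_x(\varphi)\cup\Delta_x(\psi)$; $\Delta_x(\varphi\wedge\psi)=\{\varphi'\wedge\psi'\mid\varphi'\in\Delta_x(\varphi),\psi'\in\Delta_x(\psi)\}$; $\Delta_x(\mathbf X\varphi)=\mathrm{SIMP}(\varphi)$; $\Delta_x(\varphi\mathbf U\psi)=\Delta_x(\psi)\cup\{\varphi'\wedge(\varphi\mathbf U\psi)\mid\varphi'\in\Delta_x(\varphi)\}$; $\Delta_x(\varphi\mathbf R\psi)=\{\varphi'\wedge\psi'\mid\varphi'\in\Delta_x(\varphi),\psi'\in\Delta_x(\psi)\}\cup\{\psi'\wedge(\varphi\mathbf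 R\psi)\mid\psi'\in\Delta_x(\psi)\}$; $\Delta_x(\mathbf F\varphi)=\Delta_x(\varphi)\cup\{\mathbf F\varphi\}$; $\Delta_x(\mathbf G\varphi)=\{\varphi'\wedge\mathbf G\varphi\mid\varphi'\in\Delta_x(\varphi)\}$. *)

theory Defs
  imports Main
begin

datatype 'ap ltl =
    Prop 'ap | NProp 'ap | TT | FF
  | And "'ap ltl" "'ap ltl" | Or "'ap ltl" "'ap ltl"
  | Next "'ap ltl" | Until "'ap ltl" "'ap ltl" | Release "'ap ltl" "'ap ltl"

abbreviation Fin :: "'ap ltl \<Rightarrow> 'ap ltl" where "Fin \<phi> \<equiv> Until TT \<phi>"
abbreviation Glob :: "'ap ltl \<Rightarrow> 'ap ltl" where "Glob \<phi> \<equiv> Release FF \<phi>"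

definition suffix_from :: "(nat \<Rightarrow> 's) \<Rightarrow> nat \<Rightarrow> (nat \<Rightarrow> 's)" where
  "suffix_from \<sigma> n = (\<lambda>i. \<sigma> (n + i))"

(* semantics; I : Sigma -> P(AP) is the interpretation of letters *)
fun models :: "('s \<Rightarrow> 'ap set) \<Rightarrow> (nat \<Rightarrow> 's) \<Rightarrow> 'ap ltl \<Rightarrow> bool" where
  "models I \<sigma> (Prop p) = (p \<in> I (\<sigma> 0))"
| "models I \<sigma> (NProp p) = (p \<notin> I (\<sigma> 0))"
| "models I \<sigma> TT = True"
| "models I \<sigma> FF = False"
| "models I \<sigma> (And \<phi> \<psi>) = (models I \<sigma> \<phi> \<and> models I \<sigma> \<psi>)"
| "models I \<sigma> (Or \<phi> \<psi>) = (models I \<sigma> \<phi> \<or> models I \<sigma> \<psi>)"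
| "models I \<sigma> (Next \<phi>) = models I (suffix_from \<sigma> 1) \<phi>"
| "models I \<sigma> (Until \<phi> \<psi>) =
     (\<exists>n. (\<forall>j<n. models I (suffix_from \<sigma> j) \<phi>) \<and> models I (suffix_from \<sigma> n) \<psi>)"
| "models I \<sigma> (Release \<phi> \<psi>) =
     (\<forall>n. models I (suffix_from \<sigma> n) \<psi> \<or> (\<exists>j<n. models I (suffix_from \<sigma> j) \<phi>))"

(* Conjunctions of temporal formulae modulo associativity, commutativity and
   idempotence are represented as (finite) sets of formulae; the empty set is tt. *)
type_synonym 'ap conj = "'ap ltl set"

definition models_conj :: "('s \<Rightarrow> 'ap set) \<Rightarrow> (nat \<Rightarrow> 's) \<Rightarrow> 'ap conj \<Rightarrow> bool" where
  "models_conj I \<sigma> C = (\<forall>\<psi>\<in>C. models I \<sigma> \<psi>)"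

definition conj_prod :: "'ap conj set \<Rightarrow> 'ap conj set \<Rightarrow> 'ap conj set" where
  "conj_prod A B = {a \<union> b | a b. a \<in> A \<and> b \<in> B}"

fun SIMP :: "'ap ltl \<Rightarrow> 'ap conj set" where
  "SIMP (And \<phi> \<psi>) = conj_prod (SIMP \<phi>) (SIMP \<psi>)"
| "SIMP (Or \<phi> \<psi>) = SIMP \<phi> \<union> SIMP \<psi>"
| "SIMP TT = {{}}"
| "SIMP \<phi> = {{\<phi>}}"

(* direct partial derivative Delta_x; the rules for F and G are instances of
   those for U and R since F phi = tt U phi and G phi = ff R phi *)
fun Delta :: "('s \<Rightarrow> 'ap set) \<Rightarrow> 's \<Rightarrow> 'ap ltl \<Rightarrow> 'ap conj set" where
  "Delta I x TT = {{}}"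
| "Delta I x FF = {}"
| "Delta I x (Prop p) = (if p \<in> I x then {{}} else {})"
| "Delta I x (NProp p) = (if p \<notin> I x then {{}} else {})"
| "Delta I x (Or \<phi> \<psi>) = Delta I x \<phi> \<union> Delta I x \<psi>"
| "Delta I x (And \<phi> \<psi>) = conj_prod (Delta I x \<phi>) (Delta I x \<psi>)"
| "Delta I x (Next \<phi>) = SIMP \<phi>"
| "Delta I x (Until \<phi> \<psi>) =
     Delta I x \<psi> \<union> {a \<union> {Until \<phi> \<psi>} | a. a \<in> Delta I x \<phi>}"
| "Delta I x (Release \<phi> \<psi>) =
     conj_prod (Delta I x \<phi>) (Delta I x \<psi>) \<union> {b \<union> {Release \<phi> \<psi>} | b. b \<in> Delta I x \<psi>}"

end

theory Submission
  imports Defs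
begin

lemma sfx_add[simp]: "suffix_from (suffix_from s a) b = suffix_from s (a + b)"
  by (simp add: suffix_from_def add.assoc)

lemma sfx_0[simp]: "suffix_from s 0 = s"
  by (simp add: suffix_from_def)

lemma sfx_app[simp]: "suffix_from s n 0 = s n"
  by (simp add: suffix_from_def)

lemma mc_union[simp]: "models_conj I s (A \<union> B) = (models_conj I s A \<and> models_conj I s B)"
  by (auto simp: models_conj_def)

lemma mc_empty[simp]: "models_conj I s {}" by (simp add: models_conj_def)
lemma mc_single[simp]: "models_conj I s {x} = models I s x" by (simp add: models_conj_def)

lemma conj_prod_ex: "(\<exists>C\<in>conj_prod A B. models_conj I s C) =
   ((\<exists>C\<in>A. models_conj I s C) \<and> (\<exists>C\<in>B. models_conj I s C))"
  unfolding conj_prod_def by (auto, metis mc_union)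

lemma SIMP_ok: "models I s \<phi> = (\<exists>C\<in>SIMP \<phi>. models_conj I s C)"
  by (induction \<phi> rule: SIMP.induct) (auto simp: conj_prod_ex)

lemma until_exp: "models I s (Until \<phi> \<psi>) =
  (models I s \<psi> \<or> (models I s \<phi> \<and> models I (suffix_from s 1) (Until \<phi> \<psi>)))"
proof
  assume "models I s (Until \<phi> \<psi>)"
  then obtain n where h: "\<forall>j<n. models I (suffix_from s j) \<phi>" "models I (suffix_from s n) \<psi>" by auto
  show "models I s \<psi> \<or> (models I s \<phi> \<and> models I (suffix_from s 1) (Until \<phi> \<psi>))"
  proof (cases n)
    case 0 then show ?thesis using h by simp
  next
    case (Suc m)
    have "models I s \<phi>" using h(1) Suc by (metis sfx_0 zero_less_Suc)
    moreover have "models I (suffix_from s 1) (Until \<phi> \<psi>)"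
      using h Suc by (auto intro!: exI[of _ m])
    ultimately show ?thesis by simp
  qed
next
  assume "models I s \<psi> \<or> (models I s \<phi> \<and> models I (suffix_from s 1) (Until \<phi> \<psi>))"
  then show "models I s (Until \<phi> \<psi>)"
  proof
    assume "models I s \<psi>" then show ?thesis by (auto intro!: exI[of _ 0])
  next
    assume a: "models I s \<phi> \<and> models I (suffix_from s 1) (Until \<phi> \<psi>)"
    then obtain n where h: "\<forall>j<n. models I (suffix_from s (1+j)) \<phi>" "models I (suffix_from s (1+n)) \<psi>" by auto
    have "\<forall>j<Suc n. models I (suffix_from s j) \<phi>"
    proof (intro allI impI)
      fix j assume "j < Suc n"
      then show "models I (suffix_from s j) \<phi>" using a h(1) by (cases j) auto
    qed
    then show ?thesis using h(2) by (auto intro!: exI[of _ "Suc n"])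
  qed
qed

lemma release_exp: "models I s (Release \<phi> \<psi>) =
  (models I s \<psi> \<and> (models I s \<phi> \<or> models I (suffix_from s 1) (Release \<phi> \<psi>)))"
proof
  assume h: "models I s (Release \<phi> \<psi>)"
  have "models I s \<psi>" using h by (metis models.simps(9) not_less0 sfx_0)
  moreover have "models I s \<phi> \<or> models I (suffix_from s 1) (Release \<phi> \<psi>)"
  proof (cases "models I s \<phi>")
    case False
    have "models I (suffix_from s (1+n)) \<psi> \<or> (\<exists>j<n. models I (suffix_from s (1+j)) \<phi>)" for n
    proof -
      from h have "models I (suffix_from s (Suc n)) \<psi> \<or> (\<exists>j<Suc n. models I (suffix_from s j) \<phi>)" by simp
      then show ?thesis
      proof
        assume "\<exists>j<Suc n. models I (suffix_from s j) \<phi>"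
        then obtain j where "j < Suc n" "models I (suffix_from s j) \<phi>" by blast
        then show ?thesis using False by (cases j) auto
      qed simp
    qed
    then show ?thesis by simp
  qed simp
  ultimately show "models I s \<psi> \<and> (models I s \<phi> \<or> models I (suffix_from s 1) (Release \<phi> \<psi>))" by simp
next
  assume a: "models I s \<psi> \<and> (models I s \<phi> \<or> models I (suffix_from s 1) (Release \<phi> \<psi>))"
  show "models I s (Release \<phi> \<psi>)"
  proof (cases "models I s \<phi>")
    case True
    show ?thesis
    proof (simp, intro allI)
      fix n show "models I (suffix_from s n) \<psi> \<or> (\<exists>j<n. models I (suffix_from s j) \<phi>)"
        using a True by (cases n) (auto intro!: exI[of _ 0])
    qed
  next
    case False
    then have r: "models I (suffix_from s 1) (Release \<phi> \<psi>)" using a by simp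
    show ?thesis
    proof (simp, intro allI)
      fix n show "models I (suffix_from s n) \<psi> \<or> (\<exists>j<n. models I (suffix_from s j) \<phi>)"
      proof (cases n)
        case 0 then show ?thesis using a by simp
      next
        case (Suc m)
        from r have "models I (suffix_from s (1+m)) \<psi> \<or> (\<exists>j<m. models I (suffix_from s (1+j)) \<phi>)" by simp
        then show ?thesis using Suc by auto
      qed
    qed
  qed
qed


abbreviation "P I \<phi> \<equiv> \<forall>\<sigma>. models I \<sigma> \<phi> \<longleftrightarrow>
         (\<exists>\<phi>'\<in>Delta I (\<sigma> 0) \<phi>. models_conj I (suffix_from \<sigma> 1) \<phi>')"
lemma c_and: "P I a \<Longrightarrow> P I b \<Longrightarrow> P I (And a b)" by (simp add: conj_prod_ex)
lemma c_or: "P I a \<Longrightarrow> P I b \<Longrightarrow> P I (Or a b)" by (simp add: bex_Un)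
lemma c_next: "P I (Next a)" by (intro allI, simp only: models.simps Delta.simps, rule SIMP_ok)
lemma c_base: "P I (Prop p)" "P I (NProp p)" "P I TT" "P I FF" by auto
lemma c_until: assumes "P I a" "P I b" shows "P I (Until a b)"
proof
  fix \<sigma>
  have e: "(\<exists>C\<in>{c \<union> {Until a b} | c. c \<in> Delta I (\<sigma> 0) a}. models_conj I (suffix_from \<sigma> 1) C)
    = ((\<exists>C\<in>Delta I (\<sigma> 0) a. models_conj I (suffix_from \<sigma> 1) C) \<and> models I (suffix_from \<sigma> 1) (Until a b))"
    unfolding models_conj_def by (auto simp del: models.simps)
  show "models I \<sigma> (Until a b) \<longleftrightarrow>
         (\<exists>\<phi>'\<in>Delta I (\<sigma> 0) (Until a b). models_conj I (suffix_from \<sigma> 1) \<phi>')"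
    apply (subst until_exp) apply (simp only: Delta.simps bex_Un e) using assms by blast
qed
lemma c_rel: assumes "P I a" "P I b" shows "P I (Release a b)"
proof
  fix \<sigma>
  have e: "(\<exists>C\<in>{c \<union> {Release a b} | c. c \<in> Delta I (\<sigma> 0) b}. models_conj I (suffix_from \<sigma> 1) C)
    = ((\<exists>C\<in>Delta I (\<sigma> 0) b. models_conj I (suffix_from \<sigma> 1) C) \<and> models I (suffix_from \<sigma> 1) (Release a b))"
    unfolding models_conj_def by (auto simp del: models.simps)
  show "models I \<sigma> (Release a b) \<longleftrightarrow>
         (\<exists>\<phi>'\<in>Delta I (\<sigma> 0) (Release a b). models_conj I (suffix_from \<sigma> 1) \<phi>')"
    apply (subst release_exp) apply (simp only: Delta.simps bex_Un e conj_prod_ex) using assms by blast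
qed

theorem lemma9:
  fixes I :: "'s::finite \<Rightarrow> 'ap::finite set"
    and \<sigma> :: "nat \<Rightarrow> 's" and \<phi> :: "'ap ltl"
  shows "models I \<sigma> \<phi> \<longleftrightarrow>
         (\<exists>\<phi>'\<in>Delta I (\<sigma> 0) \<phi>. models_conj I (suffix_from \<sigma> 1) \<phi>')"
proof -
  have "P I \<phi>"
  proof (induction \<phi>)
    case (And a b) then show ?case by (intro c_and)
  next
    case (Or a b) then show ?case by (intro c_or)
  next
    case (Until a b) then show ?case by (intro c_until)
  next
    case (Release a b) then show ?case by (intro c_rel)
  next
    case (Next a) show ?case by (rule c_next)
  qed (fact c_base)+
  then show ?thesis by blast
qed

end
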